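(* Let $Q=\Diamond abcd$ be a convex quadrilateral with vertices $a,b,c,d$ in clockwise order, such that the diagonal $\overline{ac}$ is horizontal, $|ac|=1$, and $1$ is the diameter of $Q$. Let the smallest axis-parallel rectangle containing $Q$ have horizontal side length $1$ and vertical side length $W$ with $0<W\le 1$, with $a$ on its left side, $b$ on its top side, $c$ on its right side and $d$ on its bottom side. Let $r=\frac14\sqrt{1+4W^2}$ (the radius of the two congruent disks circumscribing the two halves of this rectangle cut by a vertical line through its center). Then $r<1.84\, r_{opt}(Q)$.
   Context: For a compact set $X\subset\mathbb{R}^2$, $r_{opt}(X)$ denotes the minimum $r$ such that two closed disks of radius $r$ have union containing $X$. *)

theory Defs
  imports "HOL-Analysis.Analysis"
begin

text \<open>Points of the plane are modelled as real \<times> real (Euclidean norm).\<close>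

definition r_opt :: "(real \<times> real) set \<Rightarrow> real" where
  "r_opt X = Inf {r. 0 \<le> r \<and> (\<exists>p q. X \<subseteq> cball p r \<union> cball q r)}"

definition cross :: "real \<times> real \<Rightarrow> real \<times> real \<Rightarrow> real" where
  "cross u v = fst u * snd v - snd u * fst v"

text \<open>Strictly convex quadrilateral with vertices in clockwise order: every turn
  p1 -> p2 -> p3 along the boundary is a strict right turn.\<close>
definition convex_quad_cw :: "real \<times> real \<Rightarrow> real \<times> real \<Rightarrow> real \<times> real \<Rightarrow> real \<times> real \<Rightarrow> bool" where
  "convex_quad_cw a b c d \<longleftrightarrow>
     cross (b - a) (c - b) < 0 \<and> cross (c - b) (d - c) < 0 \<and>
     cross (d - c) (a - d) < 0 \<and> cross (a - d) (b - a) < 0"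

end

theory Submission
  imports Defs
begin

definition oct :: "real \<Rightarrow> real \<Rightarrow> real \<Rightarrow> bool" where
  "oct x y s \<longleftrightarrow> \<bar>x\<bar> \<le> s \<and> \<bar>y\<bar> \<le> s \<and> \<bar>x + y\<bar> \<le> (14143/10000) * s \<and> \<bar>x - y\<bar> \<le> (14143/10000) * s"

lemma abs_le_sq: fixes u v :: real assumes "u\<^sup>2 \<le> v\<^sup>2" "0 \<le> v" shows "\<bar>u\<bar> \<le> v"
  using power2_le_imp_le[of "\<bar>u\<bar>" v] assms by simp

lemma dist_oct:
  fixes z w :: "real \<times> real"
  assumes "dist z w \<le> s"
  shows "\<bar>fst z - fst w\<bar> \<le> s \<and> \<bar>snd z - snd w\<bar> \<le> s \<and>
         \<bar>(fst z - fst w) + (snd z - snd w)\<bar> \<le> (14143/10000) * s \<and>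
         \<bar>(fst z - fst w) - (snd z - snd w)\<bar> \<le> (14143/10000) * s"
proof -
  define x where "x = fst z - fst w"
  define y where "y = snd z - snd w"
  have d: "dist z w = sqrt (x\<^sup>2 + y\<^sup>2)"
    unfolding x_def y_def by (simp add: dist_prod_def dist_real_def)
  have s0: "0 \<le> s" using assms zero_le_dist order_trans by blast
  have q: "x\<^sup>2 + y\<^sup>2 \<le> s\<^sup>2"
    using assms d sqrt_le_D by metis
  have x2: "0 \<le> x\<^sup>2" "0 \<le> y\<^sup>2" by simp_all
  have 1: "\<bar>x\<bar> \<le> s" using q x2 s0 abs_le_sq[of x s] by linarith
  have 2: "\<bar>y\<bar> \<le> s" using q x2 s0 abs_le_sq[of y s] by linarith
  have e: "((14143/10000) * s)\<^sup>2 = (200024449/100000000) * s\<^sup>2" by (simp add: power2_eq_square)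
  have s2: "0 \<le> s\<^sup>2" by simp
  have p: "(x+y)\<^sup>2 \<le> 2*(x\<^sup>2+y\<^sup>2)" "(x-y)\<^sup>2 \<le> 2*(x\<^sup>2+y\<^sup>2)"
    using sum_squares_bound[of x y] sum_squares_bound[of x "-y"] by (simp_all add: power2_eq_square algebra_simps)
  have s14: "0 \<le> (14143/10000) * s" using s0 by simp
  have e2: "2 * s\<^sup>2 \<le> ((14143/10000) * s)\<^sup>2" unfolding e using s2 by simp
  have q2: "2*(x\<^sup>2+y\<^sup>2) \<le> 2 * s\<^sup>2" using q by simp
  have "(x+y)\<^sup>2 \<le> 2 * s\<^sup>2" using p(1) q2 by (rule order_trans)
  hence "(x+y)\<^sup>2 \<le> ((14143/10000) * s)\<^sup>2" using e2 by (rule order_trans)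
  hence 3: "\<bar>x+y\<bar> \<le> (14143/10000) * s" using s14 abs_le_sq by blast
  have "(x-y)\<^sup>2 \<le> 2 * s\<^sup>2" using p(2) q2 by (rule order_trans)
  hence "(x-y)\<^sup>2 \<le> ((14143/10000) * s)\<^sup>2" using e2 by (rule order_trans)
  hence 4: "\<bar>x-y\<bar> \<le> (14143/10000) * s" using s14 abs_le_sq by blast
  show ?thesis using 1 2 3 4 x_def y_def by simp
qed


lemma coreB:
  fixes xb k xd h W r :: real
  assumes box: "0 \<le> xb" "xb \<le> 1" "0 \<le> xd" "xd \<le> 1" "0 \<le> k" "0 \<le> h" "k + h = W"
    and dbd: "oct (xb - xd) (k + h) (1)"
    and p1: "oct (xb) (k) (2*r)" and p2: "oct (1 - xd) (h) (2*r)"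
    and m1: "(oct (1/2) (0) (2*r) \<and> oct (1/2 - xb) (-k) (2*r)) \<or> (oct (-1/2) (0) (2*r) \<and> oct (1/2 - xd) (h) (2*r))"
    and m2: "(oct ((xb+1)/2) (k/2) (2*r) \<and> oct ((1-xb)/2) (-k/2) (2*r)) \<or> (oct ((xb-1)/2) (k/2) (2*r) \<and> oct ((xb+1)/2 - xd) (k/2 + h) (2*r))"
    and m3: "(oct (xd/2) (-h/2) (2*r) \<and> oct (xd/2 - xb) (-h/2 - k) (2*r)) \<or> (oct (xd/2 - 1) (-h/2) (2*r) \<and> oct (-xd/2) (h/2) (2*r))"
  shows "13/200 + 6/25 * W \<le> r"
proof -
  have r0: "0 \<le> r" using p1 unfolding oct_def abs_le_iff by argo
  have C0: ?thesis if A0_1: "oct (1/2) (0) (2*r)" "oct (1/2 - xb) (-k) (2*r)" and A0_2: "oct ((xb+1)/2) (k/2) (2*r)" "oct ((1-xb)/2) (-k/2) (2*r)" and A0_3: "oct (xd/2) (-h/2) (2*r)" "oct (xd/2 - xb) (-h/2 - k) (2*r)"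
  proof -
    have f1: "(h) \<le> 2*r" using p2 unfolding oct_def abs_le_iff by argo
    have f2: "((xb+1)/2) \<le> 2*r" using A0_2(1) unfolding oct_def abs_le_iff by argo
    have f3: "- (-h/2 - k) \<le> 2*r" using A0_3(2) unfolding oct_def abs_le_iff by argo
    show ?thesis using f1 f2 f3 box r0 by argo
  qed
  have C1: ?thesis if A1_1: "oct (1/2) (0) (2*r)" "oct (1/2 - xb) (-k) (2*r)" and A1_2: "oct ((xb+1)/2) (k/2) (2*r)" "oct ((1-xb)/2) (-k/2) (2*r)" and A1_3: "oct (xd/2 - 1) (-h/2) (2*r)" "oct (-xd/2) (h/2) (2*r)"
  proof -
    have f1: "(k + h) \<le> 1" using dbd unfolding oct_def abs_le_iff by argo
    have f2: "- ((xb - xd) - (k + h)) \<le> (14143/10000) * (1)" using dbd unfolding oct_def abs_le_iff by argo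
    have f3: "(((xb+1)/2) + (k/2)) \<le> (14143/10000) * (2*r)" using A1_2(1) unfolding oct_def abs_le_iff by argo
    have f4: "- ((xd/2 - 1) + (-h/2)) \<le> (14143/10000) * (2*r)" using A1_3(1) unfolding oct_def abs_le_iff by argo
    show ?thesis using f1 f2 f3 f4 box r0 by argo
  qed
  have C2: ?thesis if A2_1: "oct (1/2) (0) (2*r)" "oct (1/2 - xb) (-k) (2*r)" and A2_2: "oct ((xb-1)/2) (k/2) (2*r)" "oct ((xb+1)/2 - xd) (k/2 + h) (2*r)" and A2_3: "oct (xd/2) (-h/2) (2*r)" "oct (xd/2 - xb) (-h/2 - k) (2*r)"
  proof -
    have f1: "(1/2) \<le> 2*r" using A2_1(1) unfolding oct_def abs_le_iff by argo
    have f2: "(k/2 + h) \<le> 2*r" using A2_2(2) unfolding oct_def abs_le_iff by argo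
    have f3: "- (-h/2 - k) \<le> 2*r" using A2_3(2) unfolding oct_def abs_le_iff by argo
    show ?thesis using f1 f2 f3 box r0 by argo
  qed
  have C3: ?thesis if A3_1: "oct (1/2) (0) (2*r)" "oct (1/2 - xb) (-k) (2*r)" and A3_2: "oct ((xb-1)/2) (k/2) (2*r)" "oct ((xb+1)/2 - xd) (k/2 + h) (2*r)" and A3_3: "oct (xd/2 - 1) (-h/2) (2*r)" "oct (-xd/2) (h/2) (2*r)"
  proof -
    have f1: "- (-k) \<le> 2*r" using A3_1(2) unfolding oct_def abs_le_iff by argo
    have f2: "(k/2 + h) \<le> 2*r" using A3_2(2) unfolding oct_def abs_le_iff by argo
    have f3: "- (xd/2 - 1) \<le> 2*r" using A3_3(1) unfolding oct_def abs_le_iff by argo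
    have f4: "- (-xd/2) \<le> 2*r" using A3_3(2) unfolding oct_def abs_le_iff by argo
    show ?thesis using f1 f2 f3 f4 box r0 by argo
  qed
  have C4: ?thesis if A4_1: "oct (-1/2) (0) (2*r)" "oct (1/2 - xd) (h) (2*r)" and A4_2: "oct ((xb+1)/2) (k/2) (2*r)" "oct ((1-xb)/2) (-k/2) (2*r)" and A4_3: "oct (xd/2) (-h/2) (2*r)" "oct (xd/2 - xb) (-h/2 - k) (2*r)"
  proof -
    have f1: "(h) \<le> 2*r" using A4_1(2) unfolding oct_def abs_le_iff by argo
    have f2: "((xb+1)/2) \<le> 2*r" using A4_2(1) unfolding oct_def abs_le_iff by argo
    have f3: "- (-h/2 - k) \<le> 2*r" using A4_3(2) unfolding oct_def abs_le_iff by argo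
    show ?thesis using f1 f2 f3 box r0 by argo
  qed
  have C5: ?thesis if A5_1: "oct (-1/2) (0) (2*r)" "oct (1/2 - xd) (h) (2*r)" and A5_2: "oct ((xb+1)/2) (k/2) (2*r)" "oct ((1-xb)/2) (-k/2) (2*r)" and A5_3: "oct (xd/2 - 1) (-h/2) (2*r)" "oct (-xd/2) (h/2) (2*r)"
  proof -
    have f1: "(k + h) \<le> 1" using dbd unfolding oct_def abs_le_iff by argo
    have f2: "- ((xb - xd) - (k + h)) \<le> (14143/10000) * (1)" using dbd unfolding oct_def abs_le_iff by argo
    have f3: "(((xb+1)/2) + (k/2)) \<le> (14143/10000) * (2*r)" using A5_2(1) unfolding oct_def abs_le_iff by argo
    have f4: "- ((xd/2 - 1) + (-h/2)) \<le> (14143/10000) * (2*r)" using A5_3(1) unfolding oct_def abs_le_iff by argo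
    show ?thesis using f1 f2 f3 f4 box r0 by argo
  qed
  have C6: ?thesis if A6_1: "oct (-1/2) (0) (2*r)" "oct (1/2 - xd) (h) (2*r)" and A6_2: "oct ((xb-1)/2) (k/2) (2*r)" "oct ((xb+1)/2 - xd) (k/2 + h) (2*r)" and A6_3: "oct (xd/2) (-h/2) (2*r)" "oct (xd/2 - xb) (-h/2 - k) (2*r)"
  proof -
    have f1: "- (-1/2) \<le> 2*r" using A6_1(1) unfolding oct_def abs_le_iff by argo
    have f2: "(k/2 + h) \<le> 2*r" using A6_2(2) unfolding oct_def abs_le_iff by argo
    have f3: "- (-h/2 - k) \<le> 2*r" using A6_3(2) unfolding oct_def abs_le_iff by argo
    show ?thesis using f1 f2 f3 box r0 by argo
  qed
  have C7: ?thesis if A7_1: "oct (-1/2) (0) (2*r)" "oct (1/2 - xd) (h) (2*r)" and A7_2: "oct ((xb-1)/2) (k/2) (2*r)" "oct ((xb+1)/2 - xd) (k/2 + h) (2*r)" and A7_3: "oct (xd/2 - 1) (-h/2) (2*r)" "oct (-xd/2) (h/2) (2*r)"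
  proof -
    have f1: "(k) \<le> 2*r" using p1 unfolding oct_def abs_le_iff by argo
    have f2: "(k/2 + h) \<le> 2*r" using A7_2(2) unfolding oct_def abs_le_iff by argo
    have f3: "- (xd/2 - 1) \<le> 2*r" using A7_3(1) unfolding oct_def abs_le_iff by argo
    have f4: "- (-xd/2) \<le> 2*r" using A7_3(2) unfolding oct_def abs_le_iff by argo
    show ?thesis using f1 f2 f3 f4 box r0 by argo
  qed
  show ?thesis using m1 m2 m3 C0 C1 C2 C3 C4 C5 C6 C7 by blast
qed

lemma coreC:
  fixes xb k xd h W r :: real
  assumes box: "0 \<le> xb" "xb \<le> 1" "0 \<le> xd" "xd \<le> 1" "0 \<le> k" "0 \<le> h" "k + h = W"
    and dbd: "oct (xb - xd) (k + h) (1)"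
    and p1: "oct (xd) (-h) (2*r)" and p2: "oct (1 - xb) (-k) (2*r)"
    and m1: "(oct (1/2) (0) (2*r) \<and> oct (1/2 - xd) (h) (2*r)) \<or> (oct (-1/2) (0) (2*r) \<and> oct (1/2 - xb) (-k) (2*r))"
    and m2: "(oct (xb/2) (k/2) (2*r) \<and> oct (xb/2 - xd) (k/2 + h) (2*r)) \<or> (oct (xb/2 - 1) (k/2) (2*r) \<and> oct (-xb/2) (-k/2) (2*r))"
    and m3: "(oct ((1+xd)/2) (-h/2) (2*r) \<and> oct ((1-xd)/2) (h/2) (2*r)) \<or> (oct ((xd-1)/2) (-h/2) (2*r) \<and> oct ((1+xd)/2 - xb) (-h/2 - k) (2*r))"
  shows "13/200 + 6/25 * W \<le> r"
proof -
  have r0: "0 \<le> r" using p1 unfolding oct_def abs_le_iff by argo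
  have C0: ?thesis if A0_1: "oct (1/2) (0) (2*r)" "oct (1/2 - xd) (h) (2*r)" and A0_2: "oct (xb/2) (k/2) (2*r)" "oct (xb/2 - xd) (k/2 + h) (2*r)" and A0_3: "oct ((1+xd)/2) (-h/2) (2*r)" "oct ((1-xd)/2) (h/2) (2*r)"
  proof -
    have f1: "- (-k) \<le> 2*r" using p2 unfolding oct_def abs_le_iff by argo
    have f2: "(k/2 + h) \<le> 2*r" using A0_2(2) unfolding oct_def abs_le_iff by argo
    have f3: "((1+xd)/2) \<le> 2*r" using A0_3(1) unfolding oct_def abs_le_iff by argo
    show ?thesis using f1 f2 f3 box r0 by argo
  qed
  have C1: ?thesis if A1_1: "oct (1/2) (0) (2*r)" "oct (1/2 - xd) (h) (2*r)" and A1_2: "oct (xb/2) (k/2) (2*r)" "oct (xb/2 - xd) (k/2 + h) (2*r)" and A1_3: "oct ((xd-1)/2) (-h/2) (2*r)" "oct ((1+xd)/2 - xb) (-h/2 - k) (2*r)"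
  proof -
    have f1: "(1/2) \<le> 2*r" using A1_1(1) unfolding oct_def abs_le_iff by argo
    have f2: "(k/2 + h) \<le> 2*r" using A1_2(2) unfolding oct_def abs_le_iff by argo
    have f3: "- (-h/2 - k) \<le> 2*r" using A1_3(2) unfolding oct_def abs_le_iff by argo
    show ?thesis using f1 f2 f3 box r0 by argo
  qed
  have C2: ?thesis if A2_1: "oct (1/2) (0) (2*r)" "oct (1/2 - xd) (h) (2*r)" and A2_2: "oct (xb/2 - 1) (k/2) (2*r)" "oct (-xb/2) (-k/2) (2*r)" and A2_3: "oct ((1+xd)/2) (-h/2) (2*r)" "oct ((1-xd)/2) (h/2) (2*r)"
  proof -
    have f1: "(k + h) \<le> 1" using dbd unfolding oct_def abs_le_iff by argo
    have f2: "((xb - xd) + (k + h)) \<le> (14143/10000) * (1)" using dbd unfolding oct_def abs_le_iff by argo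
    have f3: "- ((xb/2 - 1) - (k/2)) \<le> (14143/10000) * (2*r)" using A2_2(1) unfolding oct_def abs_le_iff by argo
    have f4: "(((1+xd)/2) - (-h/2)) \<le> (14143/10000) * (2*r)" using A2_3(1) unfolding oct_def abs_le_iff by argo
    show ?thesis using f1 f2 f3 f4 box r0 by argo
  qed
  have C3: ?thesis if A3_1: "oct (1/2) (0) (2*r)" "oct (1/2 - xd) (h) (2*r)" and A3_2: "oct (xb/2 - 1) (k/2) (2*r)" "oct (-xb/2) (-k/2) (2*r)" and A3_3: "oct ((xd-1)/2) (-h/2) (2*r)" "oct ((1+xd)/2 - xb) (-h/2 - k) (2*r)"
  proof -
    have f1: "(h) \<le> 2*r" using A3_1(2) unfolding oct_def abs_le_iff by argo
    have f2: "- (xb/2 - 1) \<le> 2*r" using A3_2(1) unfolding oct_def abs_le_iff by argo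
    have f3: "- (-xb/2) \<le> 2*r" using A3_2(2) unfolding oct_def abs_le_iff by argo
    have f4: "- (-h/2 - k) \<le> 2*r" using A3_3(2) unfolding oct_def abs_le_iff by argo
    show ?thesis using f1 f2 f3 f4 box r0 by argo
  qed
  have C4: ?thesis if A4_1: "oct (-1/2) (0) (2*r)" "oct (1/2 - xb) (-k) (2*r)" and A4_2: "oct (xb/2) (k/2) (2*r)" "oct (xb/2 - xd) (k/2 + h) (2*r)" and A4_3: "oct ((1+xd)/2) (-h/2) (2*r)" "oct ((1-xd)/2) (h/2) (2*r)"
  proof -
    have f1: "- (-k) \<le> 2*r" using A4_1(2) unfolding oct_def abs_le_iff by argo
    have f2: "(k/2 + h) \<le> 2*r" using A4_2(2) unfolding oct_def abs_le_iff by argo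
    have f3: "((1+xd)/2) \<le> 2*r" using A4_3(1) unfolding oct_def abs_le_iff by argo
    show ?thesis using f1 f2 f3 box r0 by argo
  qed
  have C5: ?thesis if A5_1: "oct (-1/2) (0) (2*r)" "oct (1/2 - xb) (-k) (2*r)" and A5_2: "oct (xb/2) (k/2) (2*r)" "oct (xb/2 - xd) (k/2 + h) (2*r)" and A5_3: "oct ((xd-1)/2) (-h/2) (2*r)" "oct ((1+xd)/2 - xb) (-h/2 - k) (2*r)"
  proof -
    have f1: "- (-1/2) \<le> 2*r" using A5_1(1) unfolding oct_def abs_le_iff by argo
    have f2: "(k/2 + h) \<le> 2*r" using A5_2(2) unfolding oct_def abs_le_iff by argo
    have f3: "- (-h/2 - k) \<le> 2*r" using A5_3(2) unfolding oct_def abs_le_iff by argo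
    show ?thesis using f1 f2 f3 box r0 by argo
  qed
  have C6: ?thesis if A6_1: "oct (-1/2) (0) (2*r)" "oct (1/2 - xb) (-k) (2*r)" and A6_2: "oct (xb/2 - 1) (k/2) (2*r)" "oct (-xb/2) (-k/2) (2*r)" and A6_3: "oct ((1+xd)/2) (-h/2) (2*r)" "oct ((1-xd)/2) (h/2) (2*r)"
  proof -
    have f1: "(k + h) \<le> 1" using dbd unfolding oct_def abs_le_iff by argo
    have f2: "((xb - xd) + (k + h)) \<le> (14143/10000) * (1)" using dbd unfolding oct_def abs_le_iff by argo
    have f3: "- ((xb/2 - 1) - (k/2)) \<le> (14143/10000) * (2*r)" using A6_2(1) unfolding oct_def abs_le_iff by argo
    have f4: "(((1+xd)/2) - (-h/2)) \<le> (14143/10000) * (2*r)" using A6_3(1) unfolding oct_def abs_le_iff by argo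
    show ?thesis using f1 f2 f3 f4 box r0 by argo
  qed
  have C7: ?thesis if A7_1: "oct (-1/2) (0) (2*r)" "oct (1/2 - xb) (-k) (2*r)" and A7_2: "oct (xb/2 - 1) (k/2) (2*r)" "oct (-xb/2) (-k/2) (2*r)" and A7_3: "oct ((xd-1)/2) (-h/2) (2*r)" "oct ((1+xd)/2 - xb) (-h/2 - k) (2*r)"
  proof -
    have f1: "- (-h) \<le> 2*r" using p1 unfolding oct_def abs_le_iff by argo
    have f2: "- (xb/2 - 1) \<le> 2*r" using A7_2(1) unfolding oct_def abs_le_iff by argo
    have f3: "- (-xb/2) \<le> 2*r" using A7_2(2) unfolding oct_def abs_le_iff by argo
    have f4: "- (-h/2 - k) \<le> 2*r" using A7_3(2) unfolding oct_def abs_le_iff by argo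
    show ?thesis using f1 f2 f3 f4 box r0 by argo
  qed
  show ?thesis using m1 m2 m3 C0 C1 C2 C3 C4 C5 C6 C7 by blast
qed

lemma octI:
  fixes z w :: "real \<times> real"
  assumes "dist z w \<le> s" "x = fst z - fst w" "y = snd z - snd w"
  shows "oct x y s"
  using dist_oct[OF assms(1)] assms(2,3) unfolding oct_def by simp

lemma fst_mid: "fst (midpoint x y) = (fst x + fst y) / 2" for x y :: "real \<times> real"
  by (simp add: midpoint_def)
lemma snd_mid: "snd (midpoint x y) = (snd x + snd y) / 2" for x y :: "real \<times> real"
  by (simp add: midpoint_def)

lemma same_ball:
  fixes z w p :: "real \<times> real"
  assumes "z \<in> cball p r" "w \<in> cball p r"
  shows "dist z w \<le> 2 * r"
proof -
  have "dist z w \<le> dist z p + dist p w" by (rule dist_triangle)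
  also have "\<dots> \<le> r + r" using assms by (simp add: dist_commute)
  finally show ?thesis by simp
qed

lemma mid_case:
  fixes M P1 P2 P3 P4 u v :: "real \<times> real"
  assumes "M \<in> cball u r \<or> M \<in> cball v r"
    "P1 \<in> cball u r" "P2 \<in> cball u r" "P3 \<in> cball v r" "P4 \<in> cball v r"
    "x1 = fst M - fst P1" "y1 = snd M - snd P1"
    "x2 = fst M - fst P2" "y2 = snd M - snd P2"
    "x3 = fst M - fst P3" "y3 = snd M - snd P3"
    "x4 = fst M - fst P4" "y4 = snd M - snd P4"
  shows "(oct x1 y1 (2*r) \<and> oct x2 y2 (2*r)) \<or> (oct x3 y3 (2*r) \<and> oct x4 y4 (2*r))"
  using assms(1)
proof
  assume H: "M \<in> cball u r"
  show ?thesis using octI[OF same_ball[OF H assms(2)] assms(6,7)] octI[OF same_ball[OF H assms(3)] assms(8,9)] by blast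
next
  assume H: "M \<in> cball v r"
  show ?thesis using octI[OF same_ball[OF H assms(4)] assms(10,11)] octI[OF same_ball[OF H assms(5)] assms(12,13)] by blast
qed

lemma inner:
  fixes a b c d u v :: "real \<times> real" and r W :: real
  assumes Qsub: "convex hull {a, b, c, d} \<subseteq> cball u r \<union> cball v r"
    and au: "a \<in> cball u r" and cv: "c \<in> cball v r"
    and horiz: "snd a = snd c"
    and box: "\<forall>p\<in>{a, b, c, d}. fst a \<le> fst p \<and> fst p \<le> fst c \<and> snd d \<le> snd p \<and> snd p \<le> snd b"
    and width: "fst c - fst a = 1"
    and height: "snd b - snd d = W"
    and W4: "1/4 \<le> W"
    and dbd1: "dist b d \<le> 1"
  shows "13/200 + 6/25 * W \<le> r"
proof -
  let ?Q = "convex hull {a, b, c, d}"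
  have cvx: "convex ?Q" by (rule convex_convex_hull)
  have inQ: "a \<in> ?Q" "b \<in> ?Q" "c \<in> ?Q" "d \<in> ?Q" by (simp_all add: hull_inc)
  have mid: "midpoint x y \<in> ?Q" if "x \<in> ?Q" "y \<in> ?Q" for x y
    using closed_segment_subset[OF that cvx] midpoint_in_closed_segment by blast
  have cov: "z \<in> cball u r \<or> z \<in> cball v r" if "z \<in> ?Q" for z using Qsub that by blast
  define xb where "xb = fst b - fst a"
  define k where "k = snd b - snd a"
  define xd where "xd = fst d - fst a"
  define h where "h = snd a - snd d"
  have co: "fst b = fst a + xb" "snd b = snd a + k" "fst c = fst a + 1" "snd c = snd a"
     "fst d = fst a + xd" "snd d = snd a - h"
    using width horiz by (simp_all add: xb_def k_def xd_def h_def)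
  have bx: "0 \<le> xb" "xb \<le> 1" "0 \<le> xd" "xd \<le> 1" "0 \<le> k" "0 \<le> h" "k + h = W"
    using box width horiz height by (simp_all add: xb_def k_def xd_def h_def)
  have dbd: "oct (xb - xd) (k + h) 1" by (rule octI[OF dbd1]) (simp_all add: co)
  consider "b \<in> cball u r" "d \<in> cball u r" | "b \<in> cball v r" "d \<in> cball v r"
    | "b \<in> cball u r" "d \<in> cball v r" | "b \<in> cball v r" "d \<in> cball u r"
    using cov[OF inQ(2)] cov[OF inQ(4)] by blast
  then show ?thesis
  proof cases
    case 1
    have "\<bar>snd b - snd d\<bar> \<le> 2 * r" using dist_oct[OF same_ball[OF 1]] by blast
    then show ?thesis using height W4 by argo
  next
    case 2
    have "\<bar>snd b - snd d\<bar> \<le> 2 * r" using dist_oct[OF same_ball[OF 2]] by blast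
    then show ?thesis using height W4 by argo
  next
    case 3
    note bu = 3(1) and dv = 3(2)
    have p1: "oct xb k (2*r)" by (rule octI[OF same_ball[OF bu au]]) (simp_all add: co)
    have p2: "oct (1 - xd) h (2*r)" by (rule octI[OF same_ball[OF cv dv]]) (simp_all add: co)
    have m1: "(oct (1/2) (0) (2*r) \<and> oct (1/2 - xb) (-k) (2*r)) \<or> (oct (-1/2) (0) (2*r) \<and> oct (1/2 - xd) (h) (2*r))"
      by (rule mid_case[OF cov[OF mid[OF inQ(1) inQ(3)]] au bu cv dv]) (simp_all add: fst_mid snd_mid co field_simps)
    have m2: "(oct ((xb+1)/2) (k/2) (2*r) \<and> oct ((1-xb)/2) (-k/2) (2*r)) \<or> (oct ((xb-1)/2) (k/2) (2*r) \<and> oct ((xb+1)/2 - xd) (k/2 + h) (2*r))"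
      by (rule mid_case[OF cov[OF mid[OF inQ(2) inQ(3)]] au bu cv dv]) (simp_all add: fst_mid snd_mid co field_simps)
    have m3: "(oct (xd/2) (-h/2) (2*r) \<and> oct (xd/2 - xb) (-h/2 - k) (2*r)) \<or> (oct (xd/2 - 1) (-h/2) (2*r) \<and> oct (-xd/2) (h/2) (2*r))"
      by (rule mid_case[OF cov[OF mid[OF inQ(4) inQ(1)]] au bu cv dv]) (simp_all add: fst_mid snd_mid co field_simps)
    show ?thesis by (rule coreB[OF bx dbd p1 p2 m1 m2 m3])
  next
    case 4
    note bv = 4(1) and du = 4(2)
    have p1: "oct xd (-h) (2*r)" by (rule octI[OF same_ball[OF du au]]) (simp_all add: co)
    have p2: "oct (1 - xb) (-k) (2*r)" by (rule octI[OF same_ball[OF cv bv]]) (simp_all add: co)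
    have m1: "(oct (1/2) (0) (2*r) \<and> oct (1/2 - xd) (h) (2*r)) \<or> (oct (-1/2) (0) (2*r) \<and> oct (1/2 - xb) (-k) (2*r))"
      by (rule mid_case[OF cov[OF mid[OF inQ(1) inQ(3)]] au du cv bv]) (simp_all add: fst_mid snd_mid co field_simps)
    have m2: "(oct (xb/2) (k/2) (2*r) \<and> oct (xb/2 - xd) (k/2 + h) (2*r)) \<or> (oct (xb/2 - 1) (k/2) (2*r) \<and> oct (-xb/2) (-k/2) (2*r))"
      by (rule mid_case[OF cov[OF mid[OF inQ(1) inQ(2)]] au du cv bv]) (simp_all add: fst_mid snd_mid co field_simps)
    have m3: "(oct ((1+xd)/2) (-h/2) (2*r) \<and> oct ((1-xd)/2) (h/2) (2*r)) \<or> (oct ((xd-1)/2) (-h/2) (2*r) \<and> oct ((1+xd)/2 - xb) (-h/2 - k) (2*r))"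
      by (rule mid_case[OF cov[OF mid[OF inQ(3) inQ(4)]] au du cv bv]) (simp_all add: fst_mid snd_mid co field_simps)
    show ?thesis by (rule coreC[OF bx dbd p1 p2 m1 m2 m3])
  qed
qed

lemma sqrt_lt: fixes x y :: real assumes "0 \<le> y" "x < y\<^sup>2" shows "sqrt x < y"
proof -
  have "sqrt x < sqrt (y\<^sup>2)" using real_sqrt_less_mono[OF assms(2)] .
  also have "sqrt (y\<^sup>2) = \<bar>y\<bar>" by (rule real_sqrt_abs)
  also have "\<bar>y\<bar> = y" using assms(1) by (rule abs_of_nonneg)
  finally show ?thesis .
qed

lemma arith_final:
  fixes W :: real
  assumes "0 < W" "W \<le> 1"
  shows "sqrt (1 + 4 * W\<^sup>2) / 4 < 1.84 * (if W \<le> 0.772 then 1/4 else 13/200 + 6/25 * W)"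
proof (cases "W \<le> 0.772")
  case True
  have "W\<^sup>2 \<le> 0.772\<^sup>2" using True assms(1) by (intro power_mono) auto
  hence "1 + 4 * W\<^sup>2 < 1.84\<^sup>2" by (simp add: power2_eq_square)
  hence "sqrt (1 + 4 * W\<^sup>2) < 1.84" by (intro sqrt_lt) auto
  thus ?thesis using True by simp
next
  case False
  have F: "772/1000 < W" using False by simp
  have t: "0 \<le> (1000 * W - 772) * (1 - W)" using False assms by (intro mult_nonneg_nonneg) auto
  have t': "(1000 * W - 772) * (1 - W) = 1772 * W - 1000 * (W*W) - 772" by (simp add: algebra_simps)
  have e: "(299 + 1104 * W)\<^sup>2 = 89401 + 660192 * W + 1218816 * (W * W)"
    by (simp add: power2_eq_square algebra_simps)
  have e2: "W\<^sup>2 = W * W" by (simp add: power2_eq_square)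
  have "390625 * (1 + 4 * W\<^sup>2) < (299 + 1104 * W)\<^sup>2"
    unfolding e e2 using t t' F by argo
  hence "1 + 4 * W\<^sup>2 < ((299 + 1104 * W) / 625)\<^sup>2" by (simp add: power_divide)
  hence "sqrt (1 + 4 * W\<^sup>2) < (299 + 1104 * W) / 625" using assms by (intro sqrt_lt) auto
  thus ?thesis using False by simp
qed

theorem lemma7:
  fixes a b c d :: "real \<times> real" and W :: real
  assumes quad: "convex_quad_cw a b c d"
    and horiz: "snd a = snd c"
    and ac: "dist a c = 1"
    and diam: "diameter (convex hull {a, b, c, d}) = 1"
    and W: "0 < W" "W \<le> 1"
    and box: "\<forall>p\<in>{a, b, c, d}. fst a \<le> fst p \<and> fst p \<le> fst c \<and> snd d \<le> snd p \<and> snd p \<le> snd b"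
    and width: "fst c - fst a = 1"
    and height: "snd b - snd d = W"
  shows "sqrt (1 + 4 * W\<^sup>2) / 4 < 1.84 * r_opt (convex hull {a, b, c, d})"
proof -
  let ?Q = "convex hull {a, b, c, d}"
  have bQ: "bounded ?Q" by (simp add: finite_imp_bounded_convex_hull)
  have dQ: "dist x y \<le> 1" if "x \<in> ?Q" "y \<in> ?Q" for x y
    using diameter_bounded_bound[OF bQ that] diam by simp
  have cvx: "convex ?Q" by (rule convex_convex_hull)
  have inQ: "a \<in> ?Q" "b \<in> ?Q" "c \<in> ?Q" "d \<in> ?Q" by (simp_all add: hull_inc)
  have mid: "midpoint x y \<in> ?Q" if "x \<in> ?Q" "y \<in> ?Q" for x y
    using closed_segment_subset[OF that cvx] midpoint_in_closed_segment by blast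
  define S where "S = {r. 0 \<le> r \<and> (\<exists>p q. ?Q \<subseteq> cball p r \<union> cball q r)}"
  have ropt: "r_opt ?Q = Inf S" unfolding r_opt_def S_def ..
  have "?Q \<subseteq> cball a 1"
  proof
    fix z assume "z \<in> ?Q"
    thus "z \<in> cball a 1" using dQ[OF inQ(1)] by (simp add: mem_cball)
  qed
  hence "?Q \<subseteq> cball a 1 \<union> cball a 1" by simp
  hence "\<exists>p q. ?Q \<subseteq> cball p 1 \<union> cball q 1" by blast
  hence "(1::real) \<in> S" unfolding S_def by simp
  hence Sne: "S \<noteq> {}" by blast
  define B where "B = (if W \<le> 0.772 then 1/4 else 13/200 + 6/25 * W)"
  have lb: "B \<le> r" if "r \<in> S" for r
  proof -
    have rS: "0 \<le> r \<and> (\<exists>p q. ?Q \<subseteq> cball p r \<union> cball q r)" using that unfolding S_def by simp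
    then obtain p q where r0: "0 \<le> r" and sub: "?Q \<subseteq> cball p r \<union> cball q r"
      by blast
    have cov: "z \<in> cball p r \<or> z \<in> cball q r" if "z \<in> ?Q" for z using sub that by blast
    let ?m = "midpoint a c"
    have dam: "dist a ?m = 1/2" "dist ?m c = 1/2" using ac by (simp_all add: dist_midpoint)
    have acr: "1 \<le> 2 * r" if "a \<in> cball x r" "c \<in> cball x r" for x
      using same_ball[OF that] ac by simp
    have q1: "1/4 \<le> r"
    proof -
      have "1/2 \<le> 2 * r"
      proof -
        have mQ: "?m \<in> ?Q" by (rule mid[OF inQ(1) inQ(3)])
        consider "a \<in> cball p r" "?m \<in> cball p r" | "a \<in> cball q r" "?m \<in> cball q r"
          | "c \<in> cball p r" "?m \<in> cball p r" | "c \<in> cball q r" "?m \<in> cball q r"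
          | "a \<in> cball p r" "c \<in> cball p r" | "a \<in> cball q r" "c \<in> cball q r"
          using cov[OF inQ(1)] cov[OF inQ(3)] cov[OF mQ] by blast
        thus ?thesis
        proof cases
          case 1 thus ?thesis using same_ball[OF 1] dam by simp
        next
          case 2 thus ?thesis using same_ball[OF 2] dam by simp
        next
          case 3 thus ?thesis using same_ball[OF 3(2) 3(1)] dam by simp
        next
          case 4 thus ?thesis using same_ball[OF 4(2) 4(1)] dam by simp
        next
          case 5 thus ?thesis using acr[OF 5] by simp
        next
          case 6 thus ?thesis using acr[OF 6] by simp
        qed
      qed
      thus ?thesis by simp
    qed
    have dbd1: "dist b d \<le> 1" using dQ inQ by blast
    show ?thesis
    proof (cases "W \<le> 0.772")
      case True thus ?thesis using q1 by (simp add: B_def)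
    next
      case False
      hence BB: "B = 13/200 + 6/25 * W" by (simp add: B_def)
      have W4: "1/4 \<le> W" using False by simp
      consider "a \<in> cball p r" "c \<in> cball p r" | "a \<in> cball q r" "c \<in> cball q r"
        | "a \<in> cball p r" "c \<in> cball q r" | "a \<in> cball q r" "c \<in> cball p r"
        using cov[OF inQ(1)] cov[OF inQ(3)] by blast
      thus ?thesis
      proof cases
        case 1 thus ?thesis using acr[OF 1] BB W by argo
      next
        case 2 thus ?thesis using acr[OF 2] BB W by argo
      next
        case 3 thus ?thesis using inner[OF sub 3(1) 3(2) horiz box width height W4 dbd1] BB by simp
      next
        case 4
        have sub': "?Q \<subseteq> cball q r \<union> cball p r" using sub by blast
        thus ?thesis using inner[OF sub' 4(1) 4(2) horiz box width height W4 dbd1] BB by simp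
      qed
    qed
  qed
  have "B \<le> Inf S" by (rule cInf_greatest[OF Sne lb])
  hence "1.84 * B \<le> 1.84 * r_opt ?Q" using ropt by simp
  moreover have "sqrt (1 + 4 * W\<^sup>2) / 4 < 1.84 * B" unfolding B_def by (rule arith_final[OF W])
  ultimately show ?thesis by linarith
qed

end
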